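(* Let $d\ge2$ be even, $\mathcal I_d=\{-\tfrac d2,\ldots,\tfrac d2-1\}$, $\mathcal H_d$ with orthonormal basis $\{|j\rangle\}_{j\in\mathcal I_d}$, and let $\mathcal R=G\circ\tilde G\circ G$ be the map on $\mathcal L(\mathcal H_d\otimes\mathcal H_d)$ defined in the context. For $X\in\mathcal L(\mathcal H_d^{\otimes2})$ write $X=\sum_{iji'j'}X^{i'j'}_{ij}|ij\rangle\langle i'j'|$. Then, with all sums over $\mathcal I_d$, $u$ ranging over $\mathcal I_d\setminus\{0\}$ and index additions taken modulo $d$ in $\mathcal I_d$, $\mathcal R(X)=\frac1{d^2}\sum_{u\ne0}\big(\sum_iX^{i,i+u}_{i,i+u}\big)\sum_a|a,a+u\rangle\langle a,a+u|+\frac1{d^2}\sum_{u\ne0}\big(\sum_iX^{i+u,i}_{i,i+u}\big)\sum_a|a,a+u\rangle\langle a+u,a|+\big(\sum_iX^{ii}_{ii}\big)\frac{I+F-E}{d^3}+\big(\frac I{d^2}-\frac{I+F-E}{d^3}\big)\mathrm{Tr}X+\big(\frac F{d^2}-\frac{I+F-E}{d^3}\big)\mathrm{Tr}(FX)$. Moreover, if $X\in\mathcal K$ then $\mathcal R(X)=\sum_{u\ne0}\Big(\frac1{d^2}\sum_iX^{i,i+u}_{i,i+u}+\frac{\sum_iX^{ii}_{ii}}{d^3}\Big)\sum_a|a,a+u\rangle\langle a,a+u|+\sum_{u\ne0}\Big(\frac1{d^2}\sum_iX^{i+u,i}_{i,i+u}+\frac{\sum_iX^{ii}_{ii}}{d^3}\Big)\sum_a|a,a+u\rangle\langle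 a+u,a|+\frac{\sum_iX^{ii}_{ii}}{d^3}E$.
   Context: $|ij\rangle=|i\rangle\otimes|j\rangle$; $\omega^x=e^{2\pi ix/d}$ for real $x$; $\hat Q=\sum_j j|j\rangle\langle j|$; $\widetilde{|k\rangle}=d^{-1/2}\sum_j\omega^{kj}|j\rangle$; $\hat P=\sum_k k\widetilde{|k\rangle}\widetilde{\langle k|}$; $V_{\alpha\beta}=\omega^{\alpha\hat Q+\beta\hat Q^2}$, $\tilde V_{\alpha\beta}=\omega^{\alpha\hat P+\beta\hat P^2}$; $G(X)=\mathbb E_{\alpha\beta}V_{\alpha\beta}^{\otimes2}X(V_{\alpha\beta}^\dagger)^{\otimes2}$, $\tilde G(X)=\mathbb E_{\alpha\beta}\tilde V_{\alpha\beta}^{\otimes2}X(\tilde V_{\alpha\beta}^\dagger)^{\otimes2}$ with $\alpha,\beta$ independent uniform on $[0,d)$. $I=\sum_{ab}|ab\rangle\langle ab|$, $F=\sum_{ab}|ab\rangle\langle ba|$ (swap), $E=\sum_i|ii\rangle\langle ii|$. $\mathcal K$ is the orthogonal complement of $\mathrm{span}\{I,F\}$ in $\mathcal L(\mathcal H_d\otimes\mathcal H_d)$ with respect to the Hilbert–Schmidt inner product $\langle X,Y\rangle=\mathrm{Tr}X^\dagger Y$. *)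

theory Defs
  imports "HOL-Analysis.Analysis"
begin

definition Idx :: "nat \<Rightarrow> int set" where
  "Idx d = {-(int d div 2) ..< int d div 2}"

definition Idx2 :: "nat \<Rightarrow> (int \<times> int) set" where
  "Idx2 d = Idx d \<times> Idx d"

text \<open>Operators on H_d (matrix entries <i|A|j>) and on H_d tensor H_d
  (matrix entries <ij|X|i'j'>, i.e. X (i,j) (i',j') is the coefficient of |ij><i'j'|).\<close>
type_synonym op1 = "int \<Rightarrow> int \<Rightarrow> complex"
type_synonym op2 = "int \<times> int \<Rightarrow> int \<times> int \<Rightarrow> complex"

definition is_op :: "nat \<Rightarrow> op2 \<Rightarrow> bool" where
  "is_op d X = (\<forall>x y. X x y \<noteq> 0 \<longrightarrow> x \<in> Idx2 d \<and> y \<in> Idx2 d)"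

definition omega :: "nat \<Rightarrow> real \<Rightarrow> complex" where
  "omega d x = cis (2 * pi * x / real d)"

text \<open>Addition of indices modulo d, represented in I_d.\<close>
definition wrap :: "nat \<Rightarrow> int \<Rightarrow> int" where
  "wrap d x = (x + int d div 2) mod int d - int d div 2"

definition opmul :: "nat \<Rightarrow> op2 \<Rightarrow> op2 \<Rightarrow> op2" where
  "opmul d A B = (\<lambda>x y. \<Sum>z\<in>Idx2 d. A x z * B z y)"

definition adj :: "op2 \<Rightarrow> op2" where
  "adj A = (\<lambda>x y. cnj (A y x))"

definition tens :: "op1 \<Rightarrow> op1 \<Rightarrow> op2" where
  "tens A B = (\<lambda>x y. A (fst x) (fst y) * B (snd x) (snd y))"

definition Vop :: "nat \<Rightarrow> real \<Rightarrow> real \<Rightarrow> op1" where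
  "Vop d \<alpha> \<beta> = (\<lambda>i j. if i = j \<and> i \<in> Idx d
       then omega d (\<alpha> * of_int i + \<beta> * (of_int i)^2) else 0)"

text \<open>Fourier basis vectors: fket d k j = <j|k~> = d^(-1/2) omega^(k j).\<close>
definition fket :: "nat \<Rightarrow> int \<Rightarrow> int \<Rightarrow> complex" where
  "fket d k j = omega d (of_int (k * j)) / complex_of_real (sqrt (real d))"

definition Vtop :: "nat \<Rightarrow> real \<Rightarrow> real \<Rightarrow> op1" where
  "Vtop d \<alpha> \<beta> = (\<lambda>i j. if i \<in> Idx d \<and> j \<in> Idx d
       then (\<Sum>k\<in>Idx d. omega d (\<alpha> * of_int k + \<beta> * (of_int k)^2) * fket d k i * cnj (fket d k j))
       else 0)"

definition twirl :: "nat \<Rightarrow> op1 \<Rightarrow> op2 \<Rightarrow> op2" where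
  "twirl d U X = opmul d (opmul d (tens U U) X) (adj (tens U U))"

definition Gmap :: "nat \<Rightarrow> op2 \<Rightarrow> op2" where
  "Gmap d X = (\<lambda>x y. integral ({0..<real d} \<times> {0..<real d})
      (\<lambda>p. twirl d (Vop d (fst p) (snd p)) X x y) / (of_nat d)^2)"

definition Gtmap :: "nat \<Rightarrow> op2 \<Rightarrow> op2" where
  "Gtmap d X = (\<lambda>x y. integral ({0..<real d} \<times> {0..<real d})
      (\<lambda>p. twirl d (Vtop d (fst p) (snd p)) X x y) / (of_nat d)^2)"

definition Rmap :: "nat \<Rightarrow> op2 \<Rightarrow> op2" where
  "Rmap d X = Gmap d (Gtmap d (Gmap d X))"

definition ketbra :: "int \<times> int \<Rightarrow> int \<times> int \<Rightarrow> op2" where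
  "ketbra a b = (\<lambda>x y. if x = a \<and> y = b then 1 else 0)"

definition Iop :: "nat \<Rightarrow> op2" where
  "Iop d = (\<lambda>x y. \<Sum>a\<in>Idx d. \<Sum>b\<in>Idx d. ketbra (a,b) (a,b) x y)"

definition Fop :: "nat \<Rightarrow> op2" where
  "Fop d = (\<lambda>x y. \<Sum>a\<in>Idx d. \<Sum>b\<in>Idx d. ketbra (a,b) (b,a) x y)"

definition Eop :: "nat \<Rightarrow> op2" where
  "Eop d = (\<lambda>x y. \<Sum>i\<in>Idx d. ketbra (i,i) (i,i) x y)"

definition tr :: "nat \<Rightarrow> op2 \<Rightarrow> complex" where
  "tr d X = (\<Sum>x\<in>Idx2 d. X x x)"

definition hs :: "nat \<Rightarrow> op2 \<Rightarrow> op2 \<Rightarrow> complex" where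
  "hs d A B = tr d (opmul d (adj A) B)"

definition inK :: "nat \<Rightarrow> op2 \<Rightarrow> bool" where
  "inK d X = (is_op d X \<and> hs d (Iop d) X = 0 \<and> hs d (Fop d) X = 0)"

definition Pdiag :: "nat \<Rightarrow> int \<Rightarrow> op2" where
  "Pdiag d u = (\<lambda>x y. \<Sum>a\<in>Idx d. ketbra (a, wrap d (a+u)) (a, wrap d (a+u)) x y)"

definition Pswap :: "nat \<Rightarrow> int \<Rightarrow> op2" where
  "Pswap d u = (\<lambda>x y. \<Sum>a\<in>Idx d. ketbra (a, wrap d (a+u)) (wrap d (a+u), a) x y)"

end

theory Submission
  imports Defs
begin


lemma omega_add: "omega d a * omega d b = omega d (a + b)"
  unfolding omega_def by (simp add: cis_mult add_divide_distrib distrib_left)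

lemma omega_cnj: "cnj (omega d a) = omega d (-a)"
  unfolding omega_def by (simp add: cis_cnj)

lemma int1:
  fixes A :: int assumes d: "d > 0"
  shows "((\<lambda>t::real. omega d (t * of_int A)) has_integral (if A = 0 then real d else 0)) {0..real d}"
proof (cases "A = 0")
  case True then show ?thesis using has_integral_const_real[of "1::complex" 0 "real d"] d by (simp add: omega_def scaleR_conv_of_real)
next
  case False
  define k where "k = 2 * pi * of_int A / real d"
  have k0: "k \<noteq> 0" using False d by (simp add: k_def)
  have eq: "omega d (t * of_int A) = exp (\<i> * complex_of_real (k * t))" for t
    unfolding omega_def k_def by (simp add: cis_conv_exp mult_ac)
  define F where "F t = exp (\<i> * complex_of_real (k * t)) / (\<i> * k)" for t
  have der: "(F has_vector_derivative exp (\<i> * complex_of_real (k * t))) (at t within {0..real d})" for t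
  proof -
    have "((\<lambda>z. exp (\<i> * complex_of_real k * z) / (\<i> * k)) has_field_derivative exp (\<i> * complex_of_real k * of_real t)) (at (of_real t))"
      by (auto intro!: derivative_eq_intros simp: k0)
    from has_vector_derivative_real_field[OF this]
    show ?thesis unfolding F_def by (simp add: mult.assoc)
  qed
  have "((\<lambda>t. exp (\<i> * complex_of_real (k * t))) has_integral (F (real d) - F 0)) {0..real d}"
    by (rule fundamental_theorem_of_calculus) (use der d in auto)
  moreover have "F (real d) = F 0"
  proof -
    have "exp (\<i> * complex_of_real (k * real d)) = cis (2 * pi * of_int A)"
      using d by (simp add: k_def cis_conv_exp mult_ac)
    also have "\<dots> = 1" by (simp add: cis_multiple_2pi)
    finally show ?thesis by (simp add: F_def)
  qed
  ultimately show ?thesis using False by (simp add: eq)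
qed

lemma omega_cont[continuous_intros]: "continuous_on S f \<Longrightarrow> continuous_on S (\<lambda>x. omega d (f x))"
  unfolding omega_def cis_conv_exp by (cases "d = 0") (simp, intro continuous_intros, auto)

lemma int2:
  fixes A B :: int assumes d: "d > 0"
  shows "((\<lambda>p::real\<times>real. omega d (fst p * of_int A + snd p * of_int B)) has_integral
           (if A = 0 \<and> B = 0 then (of_nat d)^2 else 0)) ({0..<real d} \<times> {0..<real d})"
proof -
  let ?f = "\<lambda>p::real\<times>real. omega d (fst p * of_int A + snd p * of_int B)"
  let ?C = "cbox (0::real,0::real) (real d, real d)"
  have cont: "continuous_on ?C ?f" by (intro continuous_intros)
  have i1: "integral {0..real d} (\<lambda>t. omega d (t * of_int A)) = (if A = 0 then real d else 0)"
    using int1[OF d] by (rule integral_unique)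
  have i2: "integral {0..real d} (\<lambda>t. omega d (t * of_int B)) = (if B = 0 then real d else 0)"
    using int1[OF d] by (rule integral_unique)
  have "integral ?C ?f = integral (cbox 0 (real d)) (\<lambda>x. integral (cbox 0 (real d)) (\<lambda>y. ?f (x, y)))"
    by (rule integral_prod_continuous[OF cont])
  also have "\<dots> = integral {0..real d} (\<lambda>x. omega d (x * of_int A) * integral {0..real d} (\<lambda>y. omega d (y * of_int B)))"
    by (simp add: omega_add[symmetric])
  also have "\<dots> = (if A = 0 \<and> B = 0 then (of_nat d)^2 else 0)"
    using int1[OF d, of A] by (simp add: i2 integral_mult_left power2_eq_square i1)
  finally have "(?f has_integral (if A = 0 \<and> B = 0 then (of_nat d)^2 else 0)) ?C"
    using integrable_continuous[OF cont, THEN integrable_integral] by simp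
  moreover have N: "negligible ({0..<real d} \<times> {0..<real d} - ?C \<union> (?C - {0..<real d} \<times> {0..<real d}))"
  proof (rule negligible_subset)
    show "negligible ({p. p \<bullet> (1::real,0::real) = real d} \<union> {p. p \<bullet> (0::real,1::real) = real d})"
      by (intro negligible_Un negligible_standard_hyperplane) (auto simp: Basis_prod_def Basis_real_def intro!: image_eqI)
    show "{0..<real d} \<times> {0..<real d} - ?C \<union> (?C - {0..<real d} \<times> {0..<real d})
       \<subseteq> {p. p \<bullet> (1::real,0::real) = real d} \<union> {p. p \<bullet> (0::real,1::real) = real d}"
      by (auto simp: cbox_Pair_eq inner_prod_def)
  qed
  ultimately show ?thesis
    using has_integral_spike_set_eq[of "{0..<real d} \<times> {0..<real d}" ?C ?f]
      negligible_subset[OF N, of "{x \<in> {0..<real d} \<times> {0..<real d} - ?C. ?f x \<noteq> 0}"]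
      negligible_subset[OF N, of "{x \<in> ?C - {0..<real d} \<times> {0..<real d}. ?f x \<noteq> 0}"]
    by blast
qed


definition sw :: "int \<times> int \<Rightarrow> int \<times> int" where "sw x = (snd x, fst x)"

definition Dm :: "nat \<Rightarrow> op2 \<Rightarrow> op2" where
  "Dm d Y = (\<lambda>x y. if x \<in> Idx2 d \<and> y \<in> Idx2 d \<and> (y = x \<or> y = sw x) then Y x y else 0)"

lemma sum_delta_conj: assumes "finite S" shows "(\<Sum>k\<in>S. if k = a \<and> P k then f k else 0) = (if a \<in> S \<and> P a then f a else 0)"
proof -
  have "(\<Sum>k\<in>S. if k = a \<and> P k then f k else 0) = (\<Sum>k\<in>S. if k = a then (if P a then f a else 0) else 0)"
    by (rule sum.cong) auto
  then show ?thesis using assms by simp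
qed

lemma sum_if_mult_left: fixes g :: "_ \<Rightarrow> 'b::semiring_0" assumes "finite S" shows "(\<Sum>k\<in>S. (if k = a then f k else 0) * g k) = (if a \<in> S then f a * g a else 0)"
proof -
  have "(\<Sum>k\<in>S. (if k = a then f k else 0) * g k) = (\<Sum>k\<in>S. if k = a then f a * g a else 0)"
    by (rule sum.cong) auto
  then show ?thesis using assms by simp
qed

lemma sum_if_mult_right: fixes g :: "_ \<Rightarrow> 'b::semiring_0" assumes "finite S" shows "(\<Sum>k\<in>S. g k * (if k = a then f k else 0)) = (if a \<in> S then g a * f a else 0)"
proof -
  have "(\<Sum>k\<in>S. g k * (if k = a then f k else 0)) = (\<Sum>k\<in>S. if k = a then g a * f a else 0)"
    by (rule sum.cong) auto
  then show ?thesis using assms by simp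
qed

lemma finite_Idx[simp]: "finite (Idx d)" by (simp add: Idx_def)
lemma finite_Idx2[simp]: "finite (Idx2 d)" by (simp add: Idx2_def)

lemma int_cond:
  fixes x1 x2 y1 y2 :: int
  shows "(x1 + x2 - y1 - y2 = 0 \<and> x1^2 + x2^2 - y1^2 - y2^2 = 0) \<longleftrightarrow> ((y1 = x1 \<and> y2 = x2) \<or> (y1 = x2 \<and> y2 = x1))"
proof
  assume h: "x1 + x2 - y1 - y2 = 0 \<and> x1^2 + x2^2 - y1^2 - y2^2 = 0"
  define t where "t = x1 - y1"
  have y2: "y2 = x2 + t" using h by (simp add: t_def)
  have y1: "y1 = x1 - t" by (simp add: t_def)
  have "t * (x2 - x1 + t) = 0" using h unfolding y1 y2 by (simp add: power2_eq_square algebra_simps)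
  then have "t = 0 \<or> t = x1 - x2" by auto
  then show "(y1 = x1 \<and> y2 = x2) \<or> (y1 = x2 \<and> y2 = x1)" using y1 y2 by auto
qed auto

lemma tensV: "tens (Vop d a b) (Vop d a b) x w = (if w = x then (if x \<in> Idx2 d then
   omega d (a * of_int (fst x) + b * (of_int (fst x))^2) * omega d (a * of_int (snd x) + b * (of_int (snd x))^2) else 0) else 0)"
  by (cases x; cases w) (auto simp: tens_def Vop_def Idx2_def)

lemma cnj_tensV: "cnj (tens (Vop d a b) (Vop d a b) y z) = (if z = y then (if y \<in> Idx2 d then
   cnj (omega d (a * of_int (fst y) + b * (of_int (fst y))^2) * omega d (a * of_int (snd y) + b * (of_int (snd y))^2)) else 0) else 0)"
  unfolding tensV by simp

lemma twirl_V: "twirl d (Vop d a b) X x y = (if x \<in> Idx2 d \<and> y \<in> Idx2 d then X x y *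
   omega d (a * of_int (fst x + snd x - fst y - snd y) + b * of_int ((fst x)^2 + (snd x)^2 - (fst y)^2 - (snd y)^2)) else 0)"
proof -
  have "twirl d (Vop d a b) X x y = (\<Sum>z\<in>Idx2 d. (\<Sum>w\<in>Idx2 d. tens (Vop d a b) (Vop d a b) x w * X w z) * cnj (tens (Vop d a b) (Vop d a b) y z))"
    by (simp add: twirl_def opmul_def adj_def)
  also have "\<dots> = (if x \<in> Idx2 d \<and> y \<in> Idx2 d then X x y *
     (omega d (a * of_int (fst x) + b * (of_int (fst x))^2) * omega d (a * of_int (snd x) + b * (of_int (snd x))^2)
      * cnj (omega d (a * of_int (fst y) + b * (of_int (fst y))^2) * omega d (a * of_int (snd y) + b * (of_int (snd y))^2))) else 0)"
    unfolding cnj_tensV unfolding tensV by (simp add: sum_if_mult_left sum_if_mult_right mult_ac)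
  also have "\<dots> = (if x \<in> Idx2 d \<and> y \<in> Idx2 d then X x y *
   omega d (a * of_int (fst x + snd x - fst y - snd y) + b * of_int ((fst x)^2 + (snd x)^2 - (fst y)^2 - (snd y)^2)) else 0)"
  proof -
    have "a * real_of_int (fst x) + b * (real_of_int (fst x))\<^sup>2 +
             (a * real_of_int (snd x) + b * (real_of_int (snd x))\<^sup>2) +
             (- (a * real_of_int (fst y) + b * (real_of_int (fst y))\<^sup>2) +
              - (a * real_of_int (snd y) + b * (real_of_int (snd y))\<^sup>2)) =
          a * of_int (fst x + snd x - fst y - snd y) + b * of_int ((fst x)^2 + (snd x)^2 - (fst y)^2 - (snd y)^2)"
      by (simp add: algebra_simps)
    then show ?thesis by (simp add: omega_cnj omega_add complex_cnj_mult mult.assoc)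
  qed
  finally show ?thesis .
qed
lemma twirl_int:
  assumes d: "d > 0"
  shows "((\<lambda>p. twirl d (Vop d (fst p) (snd p)) Y w z) has_integral (of_nat d)^2 * Dm d Y w z) ({0..<real d}\<times>{0..<real d})"
proof (cases "w \<in> Idx2 d \<and> z \<in> Idx2 d")
  case True
  let ?A = "fst w + snd w - fst z - snd z" and ?B = "(fst w)^2 + (snd w)^2 - (fst z)^2 - (snd z)^2"
  have hi: "((\<lambda>p. Y w z * omega d (fst p * of_int ?A + snd p * of_int ?B)) has_integral
     Y w z * (if ?A = 0 \<and> ?B = 0 then (of_nat d)^2 else 0)) ({0..<real d}\<times>{0..<real d})"
    by (rule has_integral_mult_right[OF int2[OF d]])
  have c: "(?A = 0 \<and> ?B = 0) = (z = w \<or> z = sw w)"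
    using int_cond[of "fst w" "snd w" "fst z" "snd z"] by (cases w; cases z) (auto simp: sw_def)
  have val: "Y w z * (if ?A = 0 \<and> ?B = 0 then (of_nat d)^2 else 0) = (of_nat d)^2 * Dm d Y w z"
    unfolding c using True by (simp add: Dm_def)
  have eq: "(\<lambda>p. twirl d (Vop d (fst p) (snd p)) Y w z) = (\<lambda>p. Y w z * omega d (fst p * of_int ?A + snd p * of_int ?B))"
    by (rule ext) (simp add: twirl_V True)
  show ?thesis using hi unfolding val eq .
qed (auto simp: twirl_V Dm_def)

lemma Gmap_eq: assumes d: "d > 0" shows "Gmap d Y = Dm d Y"
  unfolding Gmap_def integral_unique[OF twirl_int[OF d]] using d by (intro ext) simp

definition phi :: "nat \<Rightarrow> op1" where "phi d i k = (if i \<in> Idx d \<and> k \<in> Idx d then fket d k i else 0)"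
definition op1mul :: "nat \<Rightarrow> op1 \<Rightarrow> op1 \<Rightarrow> op1" where "op1mul d A B = (\<lambda>i j. \<Sum>k\<in>Idx d. A i k * B k j)"
definition adj1 :: "op1 \<Rightarrow> op1" where "adj1 A = (\<lambda>i j. cnj (A j i))"

lemma Vtop_eq: "Vtop d a b = op1mul d (op1mul d (phi d) (Vop d a b)) (adj1 (phi d))"
proof (intro ext)
  fix i j
  have "op1mul d (op1mul d (phi d) (Vop d a b)) (adj1 (phi d)) i j =
     (\<Sum>l\<in>Idx d. (\<Sum>k\<in>Idx d. phi d i k * (if k = l then (if l \<in> Idx d then omega d (a * of_int l + b * (of_int l)^2) else 0) else 0)) * cnj (phi d j l))"
    unfolding op1mul_def adj1_def Vop_def by (intro sum.cong refl arg_cong2[where f="(*)"]) auto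
  also have "\<dots> = (\<Sum>l\<in>Idx d. phi d i l * omega d (a * of_int l + b * (of_int l)^2) * cnj (phi d j l))"
    by (simp add: sum_if_mult_right)
  also have "\<dots> = Vtop d a b i j"
    unfolding Vtop_def phi_def by (auto intro!: sum.cong simp: mult_ac)
  finally show "Vtop d a b i j = op1mul d (op1mul d (phi d) (Vop d a b)) (adj1 (phi d)) i j" ..
qed

lemma tens_mul: "tens (op1mul d A B) (op1mul d C D) = opmul d (tens A C) (tens B D)"
  unfolding tens_def op1mul_def opmul_def Idx2_def
  by (intro ext) (simp add: sum_product sum.cartesian_product mult_ac case_prod_beta)

lemma adj_tens: "adj (tens A B) = tens (adj1 A) (adj1 B)"
  unfolding adj_def tens_def adj1_def by auto

lemma opmul_assoc: "opmul d (opmul d A B) C = opmul d A (opmul d B C)"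
  unfolding opmul_def
  apply (intro ext)
  apply (simp add: sum_distrib_left sum_distrib_right mult.assoc)
  apply (rule sum.swap)
  done

lemma adj_opmul: "adj (opmul d A B) = opmul d (adj B) (adj A)"
  unfolding adj_def opmul_def by (auto intro!: ext simp: mult.commute)

lemma adj_adj[simp]: "adj (adj A) = A" unfolding adj_def by auto

lemma twirl_Vt: "twirl d (Vtop d a b) X = opmul d (opmul d (tens (phi d) (phi d))
   (twirl d (Vop d a b) (opmul d (opmul d (adj (tens (phi d) (phi d))) X) (tens (phi d) (phi d))))) (adj (tens (phi d) (phi d)))"
proof -
  let ?P = "tens (phi d) (phi d)" and ?T = "tens (Vop d a b) (Vop d a b)"
  have "tens (Vtop d a b) (Vtop d a b) = opmul d (opmul d ?P ?T) (adj ?P)"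
    unfolding Vtop_eq tens_mul adj_tens ..
  then show ?thesis unfolding twirl_def by (simp add: adj_opmul opmul_assoc)
qed
lemma Gtmap_eq: assumes d: "d > 0"
  shows "Gtmap d X = opmul d (opmul d (tens (phi d) (phi d)) (Dm d (opmul d (opmul d (adj (tens (phi d) (phi d))) X) (tens (phi d) (phi d))))) (adj (tens (phi d) (phi d)))"
proof (intro ext)
  fix x y
  let ?P = "tens (phi d) (phi d)"
  let ?Y = "opmul d (opmul d (adj ?P) X) ?P"
  let ?S = "{0..<real d}\<times>{0..<real d}"
  have "((\<lambda>p. \<Sum>z\<in>Idx2 d. (\<Sum>w\<in>Idx2 d. ?P x w * twirl d (Vop d (fst p) (snd p)) ?Y w z) * adj ?P z y) has_integral
       (\<Sum>z\<in>Idx2 d. (\<Sum>w\<in>Idx2 d. ?P x w * ((of_nat d)^2 * Dm d ?Y w z)) * adj ?P z y)) ?S"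
    by (intro has_integral_sum finite_Idx2 has_integral_mult_left has_integral_mult_right twirl_int[OF d])
  then have "integral ?S (\<lambda>p. twirl d (Vtop d (fst p) (snd p)) X x y) =
      (\<Sum>z\<in>Idx2 d. (\<Sum>w\<in>Idx2 d. ?P x w * ((of_nat d)^2 * Dm d ?Y w z)) * adj ?P z y)"
    unfolding twirl_Vt by (simp add: opmul_def integral_unique)
  also have "\<dots> = (of_nat d)^2 * opmul d (opmul d ?P (Dm d ?Y)) (adj ?P) x y"
    unfolding opmul_def by (simp add: sum_distrib_left sum_distrib_right mult_ac)
  finally show "Gtmap d X x y = opmul d (opmul d ?P (Dm d ?Y)) (adj ?P) x y"
    unfolding Gtmap_def using d by simp
qed


definition om :: "nat \<Rightarrow> int \<Rightarrow> complex" where "om d n = omega d (of_int n)"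

lemma om_add: "om d a * om d b = om d (a + b)" unfolding om_def by (simp add: omega_add)
lemma om_cnj: "cnj (om d a) = om d (- a)" unfolding om_def by (simp add: omega_cnj)
lemma om_0[simp]: "om d 0 = 1" unfolding om_def omega_def by simp

lemma om_eq_1: assumes d: "d > 0" shows "om d t = 1 \<longleftrightarrow> int d dvd t"
proof -
  have "om d t = exp (\<i> * complex_of_real (2 * pi * of_int t / real d))"
    unfolding om_def omega_def cis_conv_exp ..
  also have "\<dots> = 1 \<longleftrightarrow> (\<exists>n::int. 2 * pi * of_int t / real d = of_int (2 * n) * pi)"
    by (simp add: exp_eq_1)
  also have "\<dots> \<longleftrightarrow> (\<exists>n::int. t = n * int d)"
  proof -
    have "2 * pi * of_int t / real d = of_int (2 * n) * pi \<longleftrightarrow> t = n * int d" for n :: int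
    proof -
      have "2 * pi * of_int t / real d = of_int (2 * n) * pi \<longleftrightarrow> 2 * pi * of_int t = 2 * pi * (of_int n * real d)"
        using d by (simp add: field_simps)
      also have "\<dots> \<longleftrightarrow> real_of_int t = of_int n * real d" by simp
      also have "\<dots> \<longleftrightarrow> t = n * int d"
        by (metis of_int_eq_iff of_int_mult of_int_of_nat_eq)
      finally show ?thesis .
    qed
    then show ?thesis by simp
  qed
  also have "\<dots> \<longleftrightarrow> int d dvd t" by (auto simp: dvd_def mult.commute)
  finally show ?thesis .
qed

lemma om_pow: "om d t ^ n = om d (int n * t)"
  unfolding om_def omega_def by (simp add: Complex.DeMoivre algebra_simps)

lemma Idx_reindex:
  assumes "even d"
  shows "(\<Sum>j\<in>Idx d. g j) = (\<Sum>i\<in>{0..<d}. g (int i - int d div 2))"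
  unfolding Idx_def
  by (rule sum.reindex_bij_witness[of _ "\<lambda>i::nat. int i - int d div 2" "\<lambda>i::int. nat (i + int d div 2)"])
     (use assms in auto)

lemma card_Idx: assumes "even d" shows "card (Idx d) = d"
proof -
  have "2 * (int d div 2) = int d" using assms by auto
  then show ?thesis unfolding Idx_def by simp
qed

lemma charsum:
  assumes e: "even d" and d: "d > 0"
  shows "(\<Sum>j\<in>Idx d. om d (j * t)) = (if int d dvd t then of_nat d else 0)"
proof (cases "int d dvd t")
  case True
  then have "om d (j * t) = 1" for j using om_eq_1[OF d] by simp
  then show ?thesis using True card_Idx[OF e] by simp
next
  case False
  let ?m = "int d div 2"
  have "(\<Sum>j\<in>Idx d. om d (j * t)) = (\<Sum>i\<in>{0..<d}. om d (- ?m * t) * om d t ^ i)"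
    unfolding Idx_reindex[OF e] om_pow om_add by (simp add: algebra_simps)
  also have "\<dots> = om d (- ?m * t) * (\<Sum>i<d. om d t ^ i)"
    by (simp add: sum_distrib_left atLeast0LessThan)
  also have "(\<Sum>i<d. om d t ^ i) = 0"
  proof -
    have "om d t \<noteq> 1" using False om_eq_1[OF d] by simp
    moreover have "om d t ^ d = 1" unfolding om_pow using om_eq_1[OF d] by simp
    ultimately show ?thesis by (simp add: sum_gp_strict)
  qed
  finally show ?thesis using False by simp
qed

lemma sum_Idx2: "(\<Sum>k\<in>Idx2 d. f k) = (\<Sum>i\<in>Idx d. \<Sum>j\<in>Idx d. f (i, j))"
  unfolding Idx2_def by (simp add: sum.cartesian_product)

lemma sum_two:
  fixes g :: "_ \<Rightarrow> 'b::comm_ring_1"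
  assumes "finite S" "k \<in> S" "k' \<in> S"
  shows "(\<Sum>l\<in>S. if l = k \<or> l = k' then g l else 0) = g k + g k' - (if k' = k then g k else 0)"
proof -
  have "(\<Sum>l\<in>S. if l = k \<or> l = k' then g l else 0) = (\<Sum>l\<in>S. (if l = k then g l else 0) + (if l = k' \<and> k' \<noteq> k then g l else 0))"
    by (rule sum.cong) auto
  also have "\<dots> = g k + (if k' \<noteq> k then g k' else 0)"
    using assms by (simp add: sum.distrib sum_delta_conj)
  finally show ?thesis by auto
qed

lemma kernel:
  assumes e: "even d" and d: "d > 0"
  shows "(\<Sum>l\<in>Idx2 d. \<Sum>k\<in>Idx2 d. if l = k \<or> l = sw k then om d (fst k * a1 + snd k * a2 - fst l * b1 - snd l * b2) else 0)
     = (of_nat d)^2 * of_bool (int d dvd a1 - b1 \<and> int d dvd a2 - b2) + (of_nat d)^2 * of_bool (int d dvd a1 - b2 \<and> int d dvd a2 - b1)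
       - of_nat d * of_bool (int d dvd a1 + a2 - b1 - b2)"
proof -
  let ?g = "\<lambda>k l. om d (fst k * a1 + snd k * a2 - fst l * b1 - snd l * b2)"
  have sk: "k \<in> Idx2 d \<Longrightarrow> sw k \<in> Idx2 d" for k by (auto simp: Idx2_def sw_def)
  have "(\<Sum>l\<in>Idx2 d. \<Sum>k\<in>Idx2 d. if l = k \<or> l = sw k then ?g k l else 0)
      = (\<Sum>k\<in>Idx2 d. \<Sum>l\<in>Idx2 d. if l = k \<or> l = sw k then ?g k l else 0)"
    by (rule sum.swap)
  also have "\<dots> = (\<Sum>k\<in>Idx2 d. ?g k k + ?g k (sw k) - (if sw k = k then ?g k k else 0))"
    by (rule sum.cong[OF refl], rule sum_two) (auto simp: sk)
  also have "\<dots> = (\<Sum>k\<in>Idx2 d. ?g k k) + (\<Sum>k\<in>Idx2 d. ?g k (sw k)) - (\<Sum>k\<in>Idx2 d. if sw k = k then ?g k k else 0)"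
    by (simp add: sum.distrib sum_subtractf)
  also have "(\<Sum>k\<in>Idx2 d. ?g k k) = (\<Sum>i\<in>Idx d. om d (i * (a1 - b1))) * (\<Sum>j\<in>Idx d. om d (j * (a2 - b2)))"
    unfolding sum_Idx2 sum_product om_add by (simp add: algebra_simps)
  also have "(\<Sum>k\<in>Idx2 d. ?g k (sw k)) = (\<Sum>i\<in>Idx d. om d (i * (a1 - b2))) * (\<Sum>j\<in>Idx d. om d (j * (a2 - b1)))"
    unfolding sum_Idx2 sum_product om_add by (simp add: algebra_simps sw_def)
  also have "(\<Sum>k\<in>Idx2 d. if sw k = k then ?g k k else 0) = (\<Sum>i\<in>Idx d. om d (i * (a1 + a2 - b1 - b2)))"
  proof -
    have "(\<Sum>k\<in>Idx2 d. if sw k = k then ?g k k else 0) = (\<Sum>i\<in>Idx d. \<Sum>j\<in>Idx d. if j = i then om d (i * (a1 + a2 - b1 - b2)) else 0)"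
      unfolding sum_Idx2 by (intro sum.cong refl) (auto simp: sw_def algebra_simps)
    then show ?thesis by simp
  qed
  finally show ?thesis unfolding charsum[OF e d] by (simp add: power2_eq_square)
qed
lemma of_bool_mult_left: "of_bool P * (t::'a::semiring_1) = (if P then t else 0)" by (cases P) simp_all

lemma P_entry: assumes "x \<in> Idx2 d" "k \<in> Idx2 d"
  shows "tens (phi d) (phi d) x k = om d (fst k * fst x + snd k * snd x) / of_nat d"
proof -
  have s: "complex_of_real (sqrt (real d)) * complex_of_real (sqrt (real d)) = of_nat d"
    unfolding of_real_mult[symmetric] by simp
  have "tens (phi d) (phi d) x k = fket d (fst k) (fst x) * fket d (snd k) (snd x)"
    using assms by (auto simp: tens_def phi_def Idx2_def)
  also have "\<dots> = om d (fst k * fst x) * om d (snd k * snd x) / of_nat d"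
    unfolding fket_def om_def s[symmetric] by simp
  finally show ?thesis by (simp add: om_add)
qed

lemma adjP_entry: assumes "x \<in> Idx2 d" "k \<in> Idx2 d"
  shows "adj (tens (phi d) (phi d)) k x = om d (- (fst k * fst x + snd k * snd x)) / of_nat d"
  unfolding adj_def P_entry[OF assms] by (simp add: om_cnj)

lemma sum_reorder4:
  "(\<Sum>l\<in>A. \<Sum>k\<in>A. \<Sum>z\<in>A. \<Sum>w\<in>A. f l k z w) = (\<Sum>w\<in>A. \<Sum>z\<in>A. \<Sum>l\<in>A. \<Sum>k\<in>A. f l k z w)"
proof -
  have "(\<Sum>l\<in>A. \<Sum>k\<in>A. \<Sum>z\<in>A. \<Sum>w\<in>A. f l k z w) = (\<Sum>l\<in>A. \<Sum>z\<in>A. \<Sum>k\<in>A. \<Sum>w\<in>A. f l k z w)"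
    by (rule sum.cong[OF refl], rule sum.swap)
  also have "\<dots> = (\<Sum>z\<in>A. \<Sum>l\<in>A. \<Sum>k\<in>A. \<Sum>w\<in>A. f l k z w)" by (rule sum.swap)
  also have "\<dots> = (\<Sum>z\<in>A. \<Sum>l\<in>A. \<Sum>w\<in>A. \<Sum>k\<in>A. f l k z w)"
    by (rule sum.cong[OF refl], rule sum.cong[OF refl], rule sum.swap)
  also have "\<dots> = (\<Sum>z\<in>A. \<Sum>w\<in>A. \<Sum>l\<in>A. \<Sum>k\<in>A. f l k z w)"
    by (rule sum.cong[OF refl], rule sum.swap)
  also have "\<dots> = (\<Sum>w\<in>A. \<Sum>z\<in>A. \<Sum>l\<in>A. \<Sum>k\<in>A. f l k z w)" by (rule sum.swap)
  finally show ?thesis .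
qed

definition KK :: "nat \<Rightarrow> int \<Rightarrow> int \<Rightarrow> int \<Rightarrow> int \<Rightarrow> complex" where
  "KK d a1 a2 b1 b2 = (of_nat d)^2 * of_bool (int d dvd a1 - b1 \<and> int d dvd a2 - b2) + (of_nat d)^2 * of_bool (int d dvd a1 - b2 \<and> int d dvd a2 - b1)
       - of_nat d * of_bool (int d dvd a1 + a2 - b1 - b2)"

lemma kernelKK:
  assumes e: "even d" and d: "d > 0"
  shows "(\<Sum>l\<in>Idx2 d. \<Sum>k\<in>Idx2 d. if l = k \<or> l = sw k then om d (fst k * a1 + snd k * a2 - fst l * b1 - snd l * b2) else 0)
     = KK d a1 a2 b1 b2"
  unfolding KK_def by (rule kernel[OF e d])

lemma R_entry:
  assumes e: "even d" and d: "d > 0" and x: "x \<in> Idx2 d" and y: "y \<in> Idx2 d"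
  shows "opmul d (opmul d (tens (phi d) (phi d)) (Dm d (opmul d (opmul d (adj (tens (phi d) (phi d))) Z) (tens (phi d) (phi d))))) (adj (tens (phi d) (phi d))) x y
    = (\<Sum>w\<in>Idx2 d. \<Sum>z\<in>Idx2 d. Z w z * KK d (fst x - fst w) (snd x - snd w) (fst y - fst z) (snd y - snd z)) / (of_nat d)^4"
proof -
  define P where "P = tens (phi d) (phi d)"
  define Q where "Q = adj P"
  define W where "W = opmul d (opmul d Q Z) P"
  have "opmul d (opmul d P (Dm d W)) Q x y = (\<Sum>l\<in>Idx2 d. \<Sum>k\<in>Idx2 d. P x k * (of_bool (l = k \<or> l = sw k) * W k l) * Q l y)"
    unfolding opmul_def sum_distrib_right
    by (intro sum.cong refl) (auto simp: Dm_def)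
  also have "\<dots> = (\<Sum>l\<in>Idx2 d. \<Sum>k\<in>Idx2 d. \<Sum>z\<in>Idx2 d. \<Sum>w\<in>Idx2 d. Z w z * (of_bool (l = k \<or> l = sw k) * (P x k * Q k w * P z l * Q l y)))"
    apply (intro sum.cong refl)
    unfolding W_def opmul_def sum_distrib_left sum_distrib_right
    apply (intro sum.cong refl)
    apply (simp add: mult_ac)
    done
  also have "\<dots> = (\<Sum>w\<in>Idx2 d. \<Sum>z\<in>Idx2 d. \<Sum>l\<in>Idx2 d. \<Sum>k\<in>Idx2 d. Z w z * (of_bool (l = k \<or> l = sw k) * (P x k * Q k w * P z l * Q l y)))"
    by (rule sum_reorder4)
  also have "\<dots> = (\<Sum>w\<in>Idx2 d. \<Sum>z\<in>Idx2 d. Z w z * ((\<Sum>l\<in>Idx2 d. \<Sum>k\<in>Idx2 d. if l = k \<or> l = sw k then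
        om d (fst k * (fst x - fst w) + snd k * (snd x - snd w) - fst l * (fst y - fst z) - snd l * (snd y - snd z)) else 0) / (of_nat d)^4))"
  proof (intro sum.cong refl)
    fix w z assume w: "w \<in> Idx2 d" and z: "z \<in> Idx2 d"
    have pq: "P x k * Q k w * P z l * Q l y = om d (fst k * (fst x - fst w) + snd k * (snd x - snd w) - fst l * (fst y - fst z) - snd l * (snd y - snd z)) / (of_nat d)^4"
      if "k \<in> Idx2 d" "l \<in> Idx2 d" for k l
      unfolding P_def Q_def P_entry[OF x that(1)] adjP_entry[OF w that(1)] P_entry[OF z that(2)] adjP_entry[OF y that(2)]
      by (simp add: om_add power4_eq_xxxx algebra_simps)
    then show "(\<Sum>l\<in>Idx2 d. \<Sum>k\<in>Idx2 d. Z w z * (of_bool (l = k \<or> l = sw k) * (P x k * Q k w * P z l * Q l y))) =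
      Z w z * ((\<Sum>l\<in>Idx2 d. \<Sum>k\<in>Idx2 d. if l = k \<or> l = sw k then
        om d (fst k * (fst x - fst w) + snd k * (snd x - snd w) - fst l * (fst y - fst z) - snd l * (snd y - snd z)) else 0) / (of_nat d)^4)"
    proof -
      have "(\<Sum>l\<in>Idx2 d. \<Sum>k\<in>Idx2 d. Z w z * (of_bool (l = k \<or> l = sw k) * (P x k * Q k w * P z l * Q l y))) =
        (\<Sum>l\<in>Idx2 d. \<Sum>k\<in>Idx2 d. Z w z * ((if l = k \<or> l = sw k then
        om d (fst k * (fst x - fst w) + snd k * (snd x - snd w) - fst l * (fst y - fst z) - snd l * (snd y - snd z)) else 0) / (of_nat d)^4))"
        by (intro sum.cong refl) (simp add: pq)
      then show ?thesis by (simp add: sum_distrib_left sum_divide_distrib)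
    qed
  qed
  also have "\<dots> = (\<Sum>w\<in>Idx2 d. \<Sum>z\<in>Idx2 d. Z w z * KK d (fst x - fst w) (snd x - snd w) (fst y - fst z) (snd y - snd z)) / (of_nat d)^4"
    by (simp only: kernelKK[OF e d] sum_divide_distrib times_divide_eq_right)
  finally show ?thesis unfolding P_def Q_def W_def .
qed


lemma wrap_in: assumes e: "even d" and d: "d > 0" shows "wrap d t \<in> Idx d"
proof -
  have "2 * (int d div 2) = int d" using e by auto
  then show ?thesis unfolding wrap_def Idx_def using d
    by (auto simp: pos_mod_bound pos_mod_sign)
qed

lemma wrap_iff: assumes e: "even d" and d: "d > 0" and v: "v \<in> Idx d"
  shows "v = wrap d t \<longleftrightarrow> int d dvd (v - t)"
proof -
  let ?m = "int d div 2"
  have m2: "2 * ?m = int d" using e by auto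
  have "v + ?m = (v + ?m) mod int d" using v m2 unfolding Idx_def by (simp add: mod_pos_pos_trivial)
  then have "v = wrap d t \<longleftrightarrow> (v + ?m) mod int d = (t + ?m) mod int d"
    unfolding wrap_def by auto
  also have "\<dots> \<longleftrightarrow> int d dvd (v - t)" by (simp add: mod_eq_dvd_iff)
  finally show ?thesis .
qed

lemma wrap_dvd: assumes e: "even d" and d: "d > 0" shows "int d dvd (wrap d t - t)"
  using wrap_iff[OF e d wrap_in[OF e d, of t], of t] by simp

lemma dvd_Idx: assumes e: "even d" and d: "d > 0" and "i \<in> Idx d" "j \<in> Idx d"
  shows "int d dvd (i - j) \<longleftrightarrow> i = j"
proof -
  have "wrap d j = j" using wrap_iff[OF e d assms(4), of j] by simp
  then show ?thesis using wrap_iff[OF e d assms(3), of j] by simp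
qed

lemma Iop_eq: "Iop d x y = of_bool (x \<in> Idx2 d \<and> y = x)"
proof -
  have "Iop d x y = (\<Sum>a\<in>Idx d. \<Sum>b\<in>Idx d. if b = snd x \<and> (a = fst x \<and> y = x) then 1 else 0)"
    unfolding Iop_def ketbra_def by (intro sum.cong refl) (cases x; auto)
  also have "\<dots> = (\<Sum>a\<in>Idx d. if a = fst x \<and> (snd x \<in> Idx d \<and> y = x) then 1 else 0)"
    by (intro sum.cong refl) (subst sum_delta_conj, simp, auto)
  also have "\<dots> = of_bool (x \<in> Idx2 d \<and> y = x)"
    by (simp add: sum_delta_conj) (cases x, auto simp: Idx2_def)
  finally show ?thesis .
qed

lemma Fop_eq: "Fop d x y = of_bool (x \<in> Idx2 d \<and> y = sw x)"
proof -
  have "Fop d x y = (\<Sum>a\<in>Idx d. \<Sum>b\<in>Idx d. if b = snd x \<and> (a = fst x \<and> y = sw x) then 1 else 0)"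
    unfolding Fop_def ketbra_def by (intro sum.cong refl) (cases x; auto simp: sw_def)
  also have "\<dots> = (\<Sum>a\<in>Idx d. if a = fst x \<and> (snd x \<in> Idx d \<and> y = sw x) then 1 else 0)"
    by (intro sum.cong refl) (subst sum_delta_conj, simp, auto)
  also have "\<dots> = of_bool (x \<in> Idx2 d \<and> y = sw x)"
    by (simp add: sum_delta_conj) (cases x, auto simp: Idx2_def)
  finally show ?thesis .
qed

lemma Eop_eq: "Eop d x y = of_bool (x \<in> Idx2 d \<and> fst x = snd x \<and> y = x)"
proof -
  have "Eop d x y = (\<Sum>i\<in>Idx d. if i = fst x \<and> (fst x = snd x \<and> y = x) then 1 else 0)"
    unfolding Eop_def ketbra_def by (intro sum.cong refl) (cases x; auto)
  also have "\<dots> = of_bool (x \<in> Idx2 d \<and> fst x = snd x \<and> y = x)"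
    by (simp add: sum_delta_conj) (cases x, auto simp: Idx2_def)
  finally show ?thesis .
qed

lemma Pdiag_eq: assumes e: "even d" and d: "d > 0"
  shows "Pdiag d u x y = of_bool (fst x \<in> Idx d \<and> snd x = wrap d (fst x + u) \<and> y = x)"
proof -
  have "Pdiag d u x y = (\<Sum>a\<in>Idx d. if a = fst x \<and> (snd x = wrap d (fst x + u) \<and> y = x) then 1 else 0)"
    unfolding Pdiag_def ketbra_def by (intro sum.cong refl) (cases x; auto)
  then show ?thesis by (simp add: sum_delta_conj)
qed

lemma Pswap_eq: assumes e: "even d" and d: "d > 0"
  shows "Pswap d u x y = of_bool (fst x \<in> Idx d \<and> snd x = wrap d (fst x + u) \<and> y = sw x)"
proof -
  have "Pswap d u x y = (\<Sum>a\<in>Idx d. if a = fst x \<and> (snd x = wrap d (fst x + u) \<and> y = sw x) then 1 else 0)"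
    unfolding Pswap_def ketbra_def by (intro sum.cong refl) (cases x; auto simp: sw_def)
  then show ?thesis by (simp add: sum_delta_conj)
qed

lemma sw_sw[simp]: "sw (sw x) = x" by (simp add: sw_def)
lemma sw_Idx2[simp]: "sw x \<in> Idx2 d \<longleftrightarrow> x \<in> Idx2 d" by (cases x) (auto simp: sw_def Idx2_def)

lemma sum_u:
  assumes e: "even d" and d: "d > 0" and x: "x \<in> Idx2 d"
  shows "(\<Sum>u\<in>Idx d - {0}. f u * of_bool (fst x \<in> Idx d \<and> snd x = wrap d (fst x + u) \<and> Q)) =
     of_bool (Q \<and> fst x \<noteq> snd x) * (f (wrap d (snd x - fst x)) :: complex)"
proof -
  have x1: "fst x \<in> Idx d" and x2: "snd x \<in> Idx d" using x by (auto simp: Idx2_def)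
  have eq: "snd x = wrap d (fst x + u) \<longleftrightarrow> u = wrap d (snd x - fst x)" if u: "u \<in> Idx d" for u
  proof -
    have "snd x = wrap d (fst x + u) \<longleftrightarrow> int d dvd (snd x - (fst x + u))" by (rule wrap_iff[OF e d x2])
    also have "\<dots> \<longleftrightarrow> int d dvd (u - (snd x - fst x))"
    proof -
      have "snd x - (fst x + u) = - (u - (snd x - fst x))" by simp
      then show ?thesis by (simp only: dvd_minus_iff)
    qed
    also have "\<dots> \<longleftrightarrow> u = wrap d (snd x - fst x)" by (rule wrap_iff[OF e d u, symmetric])
    finally show ?thesis .
  qed
  have "(\<Sum>u\<in>Idx d - {0}. f u * of_bool (fst x \<in> Idx d \<and> snd x = wrap d (fst x + u) \<and> Q)) =
        (\<Sum>u\<in>Idx d - {0}. if u = wrap d (snd x - fst x) \<and> Q then f u else 0)"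
  proof (intro sum.cong refl)
    fix u assume "u \<in> Idx d - {0}"
    then have "snd x = wrap d (fst x + u) \<longleftrightarrow> u = wrap d (snd x - fst x)" using eq by blast
    then show "f u * of_bool (fst x \<in> Idx d \<and> snd x = wrap d (fst x + u) \<and> Q) = (if u = wrap d (snd x - fst x) \<and> Q then f u else 0)"
      using x1 by simp
  qed
  also have "\<dots> = (if wrap d (snd x - fst x) \<in> Idx d - {0} \<and> Q then f (wrap d (snd x - fst x)) else 0)"
    by (rule sum_delta_conj) simp
  moreover have "wrap d (snd x - fst x) = 0 \<longleftrightarrow> fst x = snd x"
  proof -
    have "int d \<ge> 2" using e d by presburger
    then have z: "0 \<in> Idx d" unfolding Idx_def by auto
    have "(0 = wrap d (snd x - fst x)) \<longleftrightarrow> int d dvd (0 - (snd x - fst x))" by (rule wrap_iff[OF e d z])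
    also have "\<dots> \<longleftrightarrow> int d dvd (snd x - fst x)" by (simp only: diff_0 dvd_minus_iff)
    also have "\<dots> \<longleftrightarrow> snd x = fst x" by (rule dvd_Idx[OF e d x2 x1])
    finally show ?thesis by auto
  qed
  ultimately show ?thesis using wrap_in[OF e d, of "snd x - fst x"] by simp
qed

lemma csum:
  assumes e: "even d" and d: "d > 0"
  shows "(\<Sum>i\<in>Idx d. f (i, wrap d (i + v))) = (\<Sum>w\<in>Idx2 d. of_bool (int d dvd snd w - fst w - v) * (f w :: complex))"
proof -
  have "(\<Sum>w\<in>Idx2 d. of_bool (int d dvd snd w - fst w - v) * f w) = (\<Sum>i\<in>Idx d. \<Sum>j\<in>Idx d. if j = wrap d (i + v) then f (i, j) else 0)"
    unfolding sum_Idx2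
  proof (intro sum.cong refl)
    fix i j assume "i \<in> Idx d" "j \<in> Idx d"
    then have "j = wrap d (i + v) \<longleftrightarrow> int d dvd (j - i - v)" using wrap_iff[OF e d, of j "i + v"] by (simp add: diff_diff_eq)
    then show "of_bool (int d dvd snd (i, j) - fst (i, j) - v) * f (i, j) = (if j = wrap d (i + v) then f (i, j) else 0)"
      by simp
  qed
  also have "\<dots> = (\<Sum>i\<in>Idx d. f (i, wrap d (i + v)))" using wrap_in[OF e d] by simp
  finally show ?thesis ..
qed

lemma trF: "tr d (opmul d (Fop d) X) = (\<Sum>w\<in>Idx2 d. X w (sw w))"
proof -
  have "tr d (opmul d (Fop d) X) = (\<Sum>x\<in>Idx2 d. \<Sum>z\<in>Idx2 d. if z = sw x then X z x else 0)"
    unfolding tr_def opmul_def Fop_eq by (intro sum.cong refl) auto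
  also have "\<dots> = (\<Sum>x\<in>Idx2 d. X (sw x) x)" by (intro sum.cong refl) auto
  also have "\<dots> = (\<Sum>w\<in>Idx2 d. X w (sw w))"
    by (rule sum.reindex_bij_witness[of _ sw sw]) auto
  finally show ?thesis .
qed

lemma hsI: "hs d (Iop d) X = tr d X"
proof -
  have "hs d (Iop d) X = (\<Sum>x\<in>Idx2 d. \<Sum>z\<in>Idx2 d. if z = x then X z x else 0)"
    unfolding hs_def tr_def opmul_def adj_def Iop_eq by (intro sum.cong refl) auto
  then show ?thesis unfolding tr_def by simp
qed

lemma hsF: "hs d (Fop d) X = tr d (opmul d (Fop d) X)"
proof -
  have "hs d (Fop d) X = (\<Sum>x\<in>Idx2 d. \<Sum>z\<in>Idx2 d. if z = sw x then X z x else 0)"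
    unfolding hs_def tr_def opmul_def adj_def Fop_eq by (intro sum.cong refl) (auto simp: sw_def)
  also have "\<dots> = tr d (opmul d (Fop d) X)"
    unfolding tr_def opmul_def Fop_eq by (intro sum.cong refl) auto
  finally show ?thesis .
qed


lemma Rmap_eq:
  assumes e: "even d" and d: "d > 0"
  shows "Rmap d X x y = (if x \<in> Idx2 d \<and> y \<in> Idx2 d \<and> (y = x \<or> y = sw x) then
     (\<Sum>w\<in>Idx2 d. \<Sum>z\<in>Idx2 d. Dm d X w z * KK d (fst x - fst w) (snd x - snd w) (fst y - fst z) (snd y - snd z)) / (of_nat d)^4 else 0)"
  unfolding Rmap_def Gmap_eq[OF d] Gtmap_eq[OF d]
  by (subst Dm_def) (auto simp: R_entry[OF e d])

lemma sum_z:
  assumes w: "w \<in> Idx2 d"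
  shows "(\<Sum>z\<in>Idx2 d. Dm d X w z * K z) = X w w * K w + X w (sw w) * K (sw w) - (if sw w = w then X w w * K w else 0)"
proof -
  have "(\<Sum>z\<in>Idx2 d. Dm d X w z * K z) = (\<Sum>z\<in>Idx2 d. if z = w \<or> z = sw w then X w z * K z else 0)"
    using w by (intro sum.cong refl) (auto simp: Dm_def)
  also have "\<dots> = X w w * K w + X w (sw w) * K (sw w) - (if sw w = w then X w w * K w else 0)"
    by (rule sum_two) (use w in auto)
  finally show ?thesis .
qed

lemma KK_eval:
  assumes "int d dvd a1 - b1 \<longleftrightarrow> P1" "int d dvd a2 - b2 \<longleftrightarrow> P2" "int d dvd a1 - b2 \<longleftrightarrow> P3"
    "int d dvd a2 - b1 \<longleftrightarrow> P4" "int d dvd a1 + a2 - b1 - b2 \<longleftrightarrow> P5"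
  shows "KK d a1 a2 b1 b2 = (of_nat d)^2 * of_bool (P1 \<and> P2) + (of_nat d)^2 * of_bool (P3 \<and> P4) - of_nat d * of_bool P5"
  unfolding KK_def assms ..

lemma dvd_wrap_sub: assumes e: "even d" and d: "d > 0"
  shows "int d dvd (a - wrap d t) \<longleftrightarrow> int d dvd (a - t)"
proof -
  have "a - t = (a - wrap d t) + (wrap d t - t)" by simp
  then show ?thesis using wrap_dvd[OF e d, of t] by (metis dvd_add_left_iff)
qed

lemma fst_sw[simp]: "fst (sw w) = snd w" and snd_sw[simp]: "snd (sw w) = fst w" by (auto simp: sw_def)

lemma dvd_via: "a = b \<Longrightarrow> (int d dvd b \<longleftrightarrow> P) \<Longrightarrow> (int d dvd a \<longleftrightarrow> P)" by simp
lemma dvd_via_neg: "a = - b \<Longrightarrow> (int d dvd b \<longleftrightarrow> P) \<Longrightarrow> (int d dvd a \<longleftrightarrow> P)" by simp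

lemma part1:
  fixes d :: nat and X :: op2
  assumes e: "even d" and d2: "d \<ge> 2"
  shows "Rmap d X x y = 
      (\<Sum>u\<in>Idx d - {0}. (\<Sum>i\<in>Idx d. X (i, wrap d (i+u)) (i, wrap d (i+u))) * Pdiag d u x y) / (of_nat d)^2
    + (\<Sum>u\<in>Idx d - {0}. (\<Sum>i\<in>Idx d. X (i, wrap d (i+u)) (wrap d (i+u), i)) * Pswap d u x y) / (of_nat d)^2
    + (\<Sum>i\<in>Idx d. X (i,i) (i,i)) * (Iop d x y + Fop d x y - Eop d x y) / (of_nat d)^3
    + (Iop d x y / (of_nat d)^2 - (Iop d x y + Fop d x y - Eop d x y) / (of_nat d)^3) * tr d X
    + (Fop d x y / (of_nat d)^2 - (Iop d x y + Fop d x y - Eop d x y) / (of_nat d)^3)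
        * tr d (opmul d (Fop d) X)"
proof -
  have d: "d > 0" using d2 by simp
  consider (out) "\<not> (x \<in> Idx2 d \<and> y \<in> Idx2 d \<and> (y = x \<or> y = sw x))" | (inn) "x \<in> Idx2 d" "y \<in> Idx2 d" "y = x \<or> y = sw x" by blast
  then show ?thesis
  proof cases
    case out
    have xin: "x \<in> Idx2 d" if "fst x \<in> Idx d" "snd x = wrap d (fst x + u)" for u
      using that wrap_in[OF e d, of "fst x + u"] by (cases x) (auto simp: Idx2_def)
    have pd: "Pdiag d u x y = 0" for u
      unfolding Pdiag_eq[OF e d] using out xin by auto
    have ps: "Pswap d u x y = 0" for u
      unfolding Pswap_eq[OF e d] using out xin by auto
    have "Iop d x y = 0" "Fop d x y = 0" "Eop d x y = 0"
      unfolding Iop_eq Fop_eq Eop_eq using out by auto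
    moreover have "Rmap d X x y = 0" using out by (subst Rmap_eq[OF e d]) auto
    ultimately show ?thesis by (simp add: pd ps)
  next
    case inn
    let ?c = "of_nat d :: complex"
    have x1: "fst x \<in> Idx d" and x2: "snd x \<in> Idx d" using inn by (auto simp: Idx2_def)
    define Ex where "Ex = (fst x = snd x)"
    define Dw where "Dw w = (int d dvd (snd w - fst w - (snd x - fst x)))" for w
    define K1 where "K1 w = KK d (fst x - fst w) (snd x - snd w) (fst y - fst w) (snd y - snd w)" for w
    define K2 where "K2 w = KK d (fst x - fst w) (snd x - snd w) (fst y - snd w) (snd y - fst w)" for w
    have L: "Rmap d X x y = (\<Sum>w\<in>Idx2 d. X w w * K1 w + X w (sw w) * K2 w - (if sw w = w then X w w * K1 w else 0)) / ?c^4"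
      unfolding K1_def K2_def using inn by (simp add: Rmap_eq[OF e d] sum_z cong: sum.cong)
    have I: "Iop d x y = of_bool (y = x)" using inn by (simp add: Iop_eq)
    have F: "Fop d x y = of_bool (y = sw x)" using inn by (simp add: Fop_eq)
    have E: "Eop d x y = of_bool (Ex \<and> y = x)" using inn by (auto simp: Eop_eq Ex_def)
    have T1: "(\<Sum>u\<in>Idx d - {0}. (\<Sum>i\<in>Idx d. X (i, wrap d (i+u)) (i, wrap d (i+u))) * Pdiag d u x y)
        = (\<Sum>w\<in>Idx2 d. of_bool (y = x \<and> \<not> Ex) * (of_bool (Dw w) * X w w))"
    proof -
      have "(\<Sum>u\<in>Idx d - {0}. (\<Sum>i\<in>Idx d. X (i, wrap d (i+u)) (i, wrap d (i+u))) * Pdiag d u x y)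
         = of_bool (y = x \<and> fst x \<noteq> snd x) * (\<Sum>i\<in>Idx d. X (i, wrap d (i + wrap d (snd x - fst x))) (i, wrap d (i + wrap d (snd x - fst x))))"
        unfolding Pdiag_eq[OF e d] by (rule sum_u[OF e d inn(1)])
      also have "(\<Sum>i\<in>Idx d. X (i, wrap d (i + wrap d (snd x - fst x))) (i, wrap d (i + wrap d (snd x - fst x))))
          = (\<Sum>w\<in>Idx2 d. of_bool (Dw w) * X w w)"
        using csum[OF e d, of "\<lambda>w. X w w" "wrap d (snd x - fst x)"] by (simp add: Dw_def dvd_wrap_sub[OF e d])
      finally show ?thesis by (simp add: Ex_def sum_distrib_left)
    qed
    have T2: "(\<Sum>u\<in>Idx d - {0}. (\<Sum>i\<in>Idx d. X (i, wrap d (i+u)) (wrap d (i+u), i)) * Pswap d u x y)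
        = (\<Sum>w\<in>Idx2 d. of_bool (y = sw x \<and> \<not> Ex) * (of_bool (Dw w) * X w (sw w)))"
    proof -
      have "(\<Sum>u\<in>Idx d - {0}. (\<Sum>i\<in>Idx d. X (i, wrap d (i+u)) (wrap d (i+u), i)) * Pswap d u x y)
         = of_bool (y = sw x \<and> fst x \<noteq> snd x) * (\<Sum>i\<in>Idx d. X (i, wrap d (i + wrap d (snd x - fst x))) (wrap d (i + wrap d (snd x - fst x)), i))"
        unfolding Pswap_eq[OF e d] by (rule sum_u[OF e d inn(1)])
      also have "(\<Sum>i\<in>Idx d. X (i, wrap d (i + wrap d (snd x - fst x))) (wrap d (i + wrap d (snd x - fst x)), i))
          = (\<Sum>w\<in>Idx2 d. of_bool (Dw w) * X w (sw w))"
        using csum[OF e d, of "\<lambda>w. X w (sw w)" "wrap d (snd x - fst x)"] by (simp add: Dw_def dvd_wrap_sub[OF e d] sw_def)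
      finally show ?thesis by (simp add: Ex_def sum_distrib_left)
    qed
    have Del: "(\<Sum>i\<in>Idx d. X (i,i) (i,i)) = (\<Sum>w\<in>Idx2 d. of_bool (fst w = snd w) * X w w)"
    proof -
      have "(\<Sum>w\<in>Idx2 d. of_bool (fst w = snd w) * X w w) = (\<Sum>i\<in>Idx d. \<Sum>j\<in>Idx d. if j = i then X (i,i) (i,i) else 0)"
        unfolding sum_Idx2 by (intro sum.cong refl) auto
      then show ?thesis by simp
    qed
    let ?I = "Iop d x y" and ?F = "Fop d x y" and ?E = "Eop d x y"
    define rw where "rw w = of_bool (y = x \<and> \<not> Ex) * (of_bool (Dw w) * X w w) / ?c^2
       + of_bool (y = sw x \<and> \<not> Ex) * (of_bool (Dw w) * X w (sw w)) / ?c^2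
       + of_bool (fst w = snd w) * X w w * (?I + ?F - ?E) / ?c^3
       + (?I / ?c^2 - (?I + ?F - ?E) / ?c^3) * X w w
       + (?F / ?c^2 - (?I + ?F - ?E) / ?c^3) * X w (sw w)" for w
    have R: "(\<Sum>u\<in>Idx d - {0}. (\<Sum>i\<in>Idx d. X (i, wrap d (i+u)) (i, wrap d (i+u))) * Pdiag d u x y) / (of_nat d)^2
    + (\<Sum>u\<in>Idx d - {0}. (\<Sum>i\<in>Idx d. X (i, wrap d (i+u)) (wrap d (i+u), i)) * Pswap d u x y) / (of_nat d)^2
    + (\<Sum>i\<in>Idx d. X (i,i) (i,i)) * (Iop d x y + Fop d x y - Eop d x y) / (of_nat d)^3
    + (Iop d x y / (of_nat d)^2 - (Iop d x y + Fop d x y - Eop d x y) / (of_nat d)^3) * tr d X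
    + (Fop d x y / (of_nat d)^2 - (Iop d x y + Fop d x y - Eop d x y) / (of_nat d)^3)
        * tr d (opmul d (Fop d) X) = (\<Sum>w\<in>Idx2 d. rw w)"
      unfolding T1 T2 Del trF unfolding tr_def rw_def
      by (simp only: sum.distrib sum_divide_distrib sum_distrib_left sum_distrib_right)
    have pw: "(X w w * K1 w + X w (sw w) * K2 w - (if sw w = w then X w w * K1 w else 0)) / ?c^4 = rw w"
      if w: "w \<in> Idx2 d" for w
    proof -
      have w1: "fst w \<in> Idx d" and w2: "snd w \<in> Idx d" using w by (auto simp: Idx2_def)
      define Ew where "Ew = (fst w = snd w)"
      have swE: "(sw w = w) = Ew" by (cases w) (auto simp: sw_def Ew_def)
      have sxE: "(sw x = x) = Ex" by (cases x) (auto simp: sw_def Ex_def)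
      have sxE': "(x = sw x) = Ex" by (cases x) (auto simp: sw_def Ex_def)
      have dW: "int d dvd (snd w - fst w) \<longleftrightarrow> Ew" using dvd_Idx[OF e d w2 w1] by (auto simp: Ew_def)
      have dW': "int d dvd (fst w - snd w) \<longleftrightarrow> Ew" using dvd_Idx[OF e d w1 w2] by (auto simp: Ew_def)
      have dX: "int d dvd (snd x - fst x) \<longleftrightarrow> Ex" using dvd_Idx[OF e d x2 x1] by (auto simp: Ex_def)
      have dX': "int d dvd (fst x - snd x) \<longleftrightarrow> Ex" using dvd_Idx[OF e d x1 x2] by (auto simp: Ex_def)
      have dD: "int d dvd (snd w - fst w - (snd x - fst x)) \<longleftrightarrow> Dw w" by (simp add: Dw_def)
      have rel1: "Dw w = Ew" if "Ex" using that dW by (simp add: Dw_def Ex_def)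
      have rel2: "Dw w = Ex" if "Ew" using that dX' by (simp add: Dw_def Ew_def)
      have dc: "(of_nat d :: complex) \<noteq> 0" using d by simp
      consider (a) "y = x" | (b) "y = sw x" "y \<noteq> x" using inn by blast
      then show ?thesis
      proof cases
        case a
        have k1: "K1 w = ?c^2 * of_bool (True \<and> True) + ?c^2 * of_bool (Dw w \<and> Dw w) - ?c * of_bool True"
          unfolding K1_def a
          by (rule KK_eval; ((simp; fail) | (rule dvd_via[OF _ dD] dvd_via_neg[OF _ dD] dvd_via[OF _ dW] dvd_via[OF _ dX] dvd_via[OF _ dW'] dvd_via[OF _ dX'], simp add: algebra_simps)))
        have k2: "K2 w = ?c^2 * of_bool (Ew \<and> Ew) + ?c^2 * of_bool (Ex \<and> Ex) - ?c * of_bool True"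
          unfolding K2_def a
          by (rule KK_eval; ((simp; fail) | (rule dvd_via[OF _ dD] dvd_via_neg[OF _ dD] dvd_via[OF _ dW] dvd_via[OF _ dX] dvd_via[OF _ dW'] dvd_via[OF _ dX'], simp add: algebra_simps)))
        show ?thesis
          unfolding rw_def I F E k1 k2 unfolding a Ew_def[symmetric]
          using rel1 rel2 swE sxE sxE' dc
          by (cases Ex; cases Ew; cases "Dw w") (auto simp: field_simps power2_eq_square power3_eq_cube power4_eq_xxxx)
      next
        case b
        have k1: "K1 w = ?c^2 * of_bool (Ex \<and> Ex) + ?c^2 * of_bool (Ew \<and> Ew) - ?c * of_bool True"
          unfolding K1_def b
          by (rule KK_eval; ((simp; fail) | (rule dvd_via[OF _ dD] dvd_via_neg[OF _ dD] dvd_via[OF _ dW] dvd_via[OF _ dX] dvd_via[OF _ dW'] dvd_via[OF _ dX'], simp add: algebra_simps)))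
        have k2: "K2 w = ?c^2 * of_bool (Dw w \<and> Dw w) + ?c^2 * of_bool (True \<and> True) - ?c * of_bool True"
          unfolding K2_def b
          by (rule KK_eval; ((simp; fail) | (rule dvd_via[OF _ dD] dvd_via_neg[OF _ dD] dvd_via[OF _ dW] dvd_via[OF _ dX] dvd_via[OF _ dW'] dvd_via[OF _ dX'], simp add: algebra_simps)))
        have nEx: "\<not> Ex" using b sxE by auto
        show ?thesis
          unfolding rw_def I F E k1 k2 unfolding b(1) Ew_def[symmetric]
          using rel1 rel2 swE sxE sxE' dc nEx
          by (cases Ew; cases "Dw w") (auto simp: field_simps power2_eq_square power3_eq_cube power4_eq_xxxx)
      qed
    qed
    have "Rmap d X x y = (\<Sum>w\<in>Idx2 d. rw w)"
      unfolding L sum_divide_distrib by (intro sum.cong refl) (simp add: pw)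
    then show ?thesis by (simp only: R)
  qed
qed

lemma PE:
  assumes e: "even d" and d: "d > 0"
  shows "(\<Sum>u\<in>Idx d - {0}. Pdiag d u x y) + (\<Sum>u\<in>Idx d - {0}. Pswap d u x y) + Eop d x y = Iop d x y + Fop d x y - Eop d x y"
proof (cases "x \<in> Idx2 d")
  case True
  have "(\<Sum>u\<in>Idx d - {0}. Pdiag d u x y) = (\<Sum>u\<in>Idx d - {0}. (\<lambda>_. 1) u * of_bool (fst x \<in> Idx d \<and> snd x = wrap d (fst x + u) \<and> y = x))"
    by (simp add: Pdiag_eq[OF e d])
  also have "\<dots> = of_bool (y = x \<and> fst x \<noteq> snd x)" by (subst sum_u[OF e d True]) simp
  finally have 1: "(\<Sum>u\<in>Idx d - {0}. Pdiag d u x y) = of_bool (y = x \<and> fst x \<noteq> snd x)" .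
  have "(\<Sum>u\<in>Idx d - {0}. Pswap d u x y) = (\<Sum>u\<in>Idx d - {0}. (\<lambda>_. 1) u * of_bool (fst x \<in> Idx d \<and> snd x = wrap d (fst x + u) \<and> y = sw x))"
    by (simp add: Pswap_eq[OF e d])
  also have "\<dots> = of_bool (y = sw x \<and> fst x \<noteq> snd x)" by (subst sum_u[OF e d True]) simp
  finally have 2: "(\<Sum>u\<in>Idx d - {0}. Pswap d u x y) = of_bool (y = sw x \<and> fst x \<noteq> snd x)" .
  have sx: "sw x = x \<longleftrightarrow> fst x = snd x" by (cases x) (auto simp: sw_def)
  show ?thesis unfolding 1 2 Iop_eq Fop_eq Eop_eq using True sx
    by (cases "fst x = snd x") auto
next
  case False
  have xin: "x \<in> Idx2 d" if "fst x \<in> Idx d" "snd x = wrap d (fst x + u)" for u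
    using that wrap_in[OF e d, of "fst x + u"] by (cases x) (auto simp: Idx2_def)
  have "Pdiag d u x y = 0" "Pswap d u x y = 0" for u
    unfolding Pdiag_eq[OF e d] Pswap_eq[OF e d] using False xin by auto
  then show ?thesis using False by (simp add: Iop_eq Fop_eq Eop_eq)
qed

lemma part2:
  fixes d :: nat and X :: op2
  assumes e: "even d" and d2: "d \<ge> 2" and K: "inK d X"
  shows "Rmap d X x y =
      (\<Sum>u\<in>Idx d - {0}. ((\<Sum>i\<in>Idx d. X (i, wrap d (i+u)) (i, wrap d (i+u))) / (of_nat d)^2
          + (\<Sum>i\<in>Idx d. X (i,i) (i,i)) / (of_nat d)^3) * Pdiag d u x y)
    + (\<Sum>u\<in>Idx d - {0}. ((\<Sum>i\<in>Idx d. X (i, wrap d (i+u)) (wrap d (i+u), i)) / (of_nat d)^2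
          + (\<Sum>i\<in>Idx d. X (i,i) (i,i)) / (of_nat d)^3) * Pswap d u x y)
    + (\<Sum>i\<in>Idx d. X (i,i) (i,i)) / (of_nat d)^3 * Eop d x y"
proof -
  have d: "d > 0" using d2 by simp
  have t1: "tr d X = 0" using K hsI by (simp add: inK_def)
  have t2: "tr d (opmul d (Fop d) X) = 0" using K hsF by (simp add: inK_def)
  let ?D = "(\<Sum>i\<in>Idx d. X (i,i) (i,i))"
  let ?A = "(\<Sum>u\<in>Idx d - {0}. (\<Sum>i\<in>Idx d. X (i, wrap d (i+u)) (i, wrap d (i+u))) * Pdiag d u x y)"
  let ?B = "(\<Sum>u\<in>Idx d - {0}. (\<Sum>i\<in>Idx d. X (i, wrap d (i+u)) (wrap d (i+u), i)) * Pswap d u x y)"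
  have "Rmap d X x y = ?A / (of_nat d)^2 + ?B / (of_nat d)^2 + ?D * (Iop d x y + Fop d x y - Eop d x y) / (of_nat d)^3"
    using part1[OF e d2, of X x y] t1 t2 by simp
  also have "\<dots> = ?A / (of_nat d)^2 + ?B / (of_nat d)^2 + ?D / (of_nat d)^3 *
      ((\<Sum>u\<in>Idx d - {0}. Pdiag d u x y) + (\<Sum>u\<in>Idx d - {0}. Pswap d u x y) + Eop d x y)"
    unfolding PE[OF e d] by simp
  also have "\<dots> = (\<Sum>u\<in>Idx d - {0}. ((\<Sum>i\<in>Idx d. X (i, wrap d (i+u)) (i, wrap d (i+u))) / (of_nat d)^2
          + ?D / (of_nat d)^3) * Pdiag d u x y)
    + (\<Sum>u\<in>Idx d - {0}. ((\<Sum>i\<in>Idx d. X (i, wrap d (i+u)) (wrap d (i+u), i)) / (of_nat d)^2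
          + ?D / (of_nat d)^3) * Pswap d u x y)
    + ?D / (of_nat d)^3 * Eop d x y"
    by (simp add: distrib_right distrib_left sum.distrib sum_distrib_left sum_divide_distrib)
       (simp add: sum_divide_distrib[symmetric])
  finally show ?thesis .
qed

theorem corollary2:
  fixes d :: nat and X :: op2
  assumes "even d" and "d \<ge> 2" and "is_op d X"
  shows "(Rmap d X = (\<lambda>x y.
      (\<Sum>u\<in>Idx d - {0}. (\<Sum>i\<in>Idx d. X (i, wrap d (i+u)) (i, wrap d (i+u))) * Pdiag d u x y) / (of_nat d)^2
    + (\<Sum>u\<in>Idx d - {0}. (\<Sum>i\<in>Idx d. X (i, wrap d (i+u)) (wrap d (i+u), i)) * Pswap d u x y) / (of_nat d)^2
    + (\<Sum>i\<in>Idx d. X (i,i) (i,i)) * (Iop d x y + Fop d x y - Eop d x y) / (of_nat d)^3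
    + (Iop d x y / (of_nat d)^2 - (Iop d x y + Fop d x y - Eop d x y) / (of_nat d)^3) * tr d X
    + (Fop d x y / (of_nat d)^2 - (Iop d x y + Fop d x y - Eop d x y) / (of_nat d)^3)
        * tr d (opmul d (Fop d) X)))
    \<and> (inK d X \<longrightarrow> Rmap d X = (\<lambda>x y.
      (\<Sum>u\<in>Idx d - {0}. ((\<Sum>i\<in>Idx d. X (i, wrap d (i+u)) (i, wrap d (i+u))) / (of_nat d)^2
          + (\<Sum>i\<in>Idx d. X (i,i) (i,i)) / (of_nat d)^3) * Pdiag d u x y)
    + (\<Sum>u\<in>Idx d - {0}. ((\<Sum>i\<in>Idx d. X (i, wrap d (i+u)) (wrap d (i+u), i)) / (of_nat d)^2
          + (\<Sum>i\<in>Idx d. X (i,i) (i,i)) / (of_nat d)^3) * Pswap d u x y)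
    + (\<Sum>i\<in>Idx d. X (i,i) (i,i)) / (of_nat d)^3 * Eop d x y))"
    apply (intro conjI impI ext)
   apply (rule part1[OF assms(1,2)])
  apply (rule part2[OF assms(1,2)])
  apply assumption
  done

end
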